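(* For a real Banach space $X$ the following are equivalent: (a) $X$ has the Kadec-Klee property; (b) for every nonempty closed convex subset $V$ of $X$, if $(X,V,\mathcal{F}(X))$ has weak-$\mathscr{F}_{cwm}$-SACP, then $(X,V,\mathcal{F}(X))$ has $\mathscr{F}_{cwm}$-SACP (with respect to the norm topology); here $\mathcal{F}(X)$ is the family of nonempty finite subsets of $X$ and $\mathscr{F}_{cwm}$ is the class of all convex, weakly strictly monotone functions $f:\ell_\infty^+(F)\to[0,\infty)$, $F\in\mathcal{F}(X)$.
   Context: $X$ has the Kadec-Klee property if $x,x_n\in S_X$ and $x_n\to x$ weakly imply $x_n\to x$ in norm. For finite $F=\{x_1,\dots,x_N\}$, $\ell_\infty^+(F)$ is identified with $[0,\infty)^N$ with the coordinatewise order. $f$ is monotone if $\varphi_1\le\varphi_2$ implies $f(\varphi_1)\le f(\varphi_2)$; weakly strictly monotone if monotone and $\varphi_1(t)<\varphi_2(t)$ for all $t$ implies $f(\varphi_1)<f(\varphi_2)$. $r_f(x,F)=f(\|x-x_1\|,\dots,\|x-x_N\|)$, $\mathrm{rad}_V^f(F)=\inf_{v\in V}r_f(v,F)$. For $\tau$ the norm or weak topology, $(X,V,\mathfrak{F})$ has $\tau$-$\mathscr{F}$-SACP if for every $F\in\mathfrak{F}$, every $f\in\mathscr{F}$ on $\ell_\infty^+(F)$ and every sequence $(v_n)\subseteq V$ with $r_f(v_n,F)\to\mathrm{rad}_V^f(F)$, $(v_n)$ has a $\tau$-convergent subsequence; "weak-" refers to $\tau$ weak, no prefix to $\tau$ norm.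 *)

theory Defs
  imports "HOL-Analysis.Analysis"
begin

definition weakly_convergent_to :: "(nat \<Rightarrow> 'a::real_normed_vector) \<Rightarrow> 'a \<Rightarrow> bool" where
  "weakly_convergent_to s x \<longleftrightarrow>
     (\<forall>\<phi>::'a \<Rightarrow> real. bounded_linear \<phi> \<longrightarrow> (\<lambda>n. \<phi> (s n)) \<longlonglongrightarrow> \<phi> x)"

definition kadec_klee :: "'a::real_normed_vector itself \<Rightarrow> bool" where
  "kadec_klee _ \<longleftrightarrow>
     (\<forall>(x::'a) s. norm x = 1 \<and> (\<forall>n. norm (s n) = 1) \<and> weakly_convergent_to s x
        \<longrightarrow> s \<longlonglongrightarrow> x)"

text \<open>The cone \<open>\<ell>\<^sub>\<infinity>\<^sup>+(F)\<close>, represented as the functions \<open>F \<rightarrow> [0,\<infinity>)\<close>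
  extended by 0 outside F.\<close>
definition linf_plus :: "'a set \<Rightarrow> ('a \<Rightarrow> real) set" where
  "linf_plus F = {\<phi>. (\<forall>t\<in>F. 0 \<le> \<phi> t) \<and> (\<forall>t. t \<notin> F \<longrightarrow> \<phi> t = 0)}"

definition F_cwm :: "'a set \<Rightarrow> (('a \<Rightarrow> real) \<Rightarrow> real) set" where
  "F_cwm F = {f.
     (\<forall>\<phi>\<in>linf_plus F. 0 \<le> f \<phi>) \<and>
     (\<forall>\<phi>1\<in>linf_plus F. \<forall>\<phi>2\<in>linf_plus F. \<forall>u::real. 0 \<le> u \<and> u \<le> 1 \<longrightarrow>
        f (\<lambda>t. u * \<phi>1 t + (1 - u) * \<phi>2 t) \<le> u * f \<phi>1 + (1 - u) * f \<phi>2) \<and>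
     (\<forall>\<phi>1\<in>linf_plus F. \<forall>\<phi>2\<in>linf_plus F. (\<forall>t\<in>F. \<phi>1 t \<le> \<phi>2 t) \<longrightarrow> f \<phi>1 \<le> f \<phi>2) \<and>
     (\<forall>\<phi>1\<in>linf_plus F. \<forall>\<phi>2\<in>linf_plus F. (\<forall>t\<in>F. \<phi>1 t < \<phi>2 t) \<longrightarrow> f \<phi>1 < f \<phi>2)}"

definition r_f :: "(('a \<Rightarrow> real) \<Rightarrow> real) \<Rightarrow> 'a::real_normed_vector \<Rightarrow> 'a set \<Rightarrow> real" where
  "r_f f x F = f (\<lambda>t. if t \<in> F then norm (x - t) else 0)"

definition rad_f :: "(('a \<Rightarrow> real) \<Rightarrow> real) \<Rightarrow> 'a::real_normed_vector set \<Rightarrow> 'a set \<Rightarrow> real" where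
  "rad_f f V F = (INF v\<in>V. r_f f v F)"

text \<open>\<open>\<tau>\<close>-\<open>\<F>\<^sub>c\<^sub>w\<^sub>m\<close>-SACP for the triple \<open>(X, V, \<F>(X))\<close>, where \<open>\<F>(X)\<close> is the family of
  nonempty finite subsets; \<open>conv\<close> is the notion of convergence of \<open>\<tau>\<close>.\<close>
definition SACP_cwm ::
  "((nat \<Rightarrow> 'a) \<Rightarrow> 'a \<Rightarrow> bool) \<Rightarrow> 'a::real_normed_vector set \<Rightarrow> bool" where
  "SACP_cwm conv V \<longleftrightarrow>
     (\<forall>F. finite F \<and> F \<noteq> {} \<longrightarrow>
       (\<forall>f\<in>F_cwm F. \<forall>v::nat \<Rightarrow> 'a. (\<forall>n. v n \<in> V) \<and>
          (\<lambda>n. r_f f (v n) F) \<longlonglongrightarrow> rad_f f V F \<longrightarrow>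
          (\<exists>g x. strict_mono g \<and> conv (v \<circ> g) x)))"

definition norm_SACP_cwm :: "'a::real_normed_vector set \<Rightarrow> bool" where
  "norm_SACP_cwm V \<longleftrightarrow> SACP_cwm (\<lambda>s x. s \<longlonglongrightarrow> x) V"

definition weak_SACP_cwm :: "'a::real_normed_vector set \<Rightarrow> bool" where
  "weak_SACP_cwm V \<longleftrightarrow> SACP_cwm weakly_convergent_to V"

end

theory Submission
  imports Defs "HOL-Library.Diagonal_Subsequence"
begin

definition sublin :: "('a::real_vector \<Rightarrow> real) \<Rightarrow> bool" where
  "sublin p \<longleftrightarrow> (\<forall>x y. p (x + y) \<le> p x + p y) \<and> (\<forall>c x. 0 < c \<longrightarrow> p (c *\<^sub>R x) = c * p x)"

definition goodG :: "('a::real_vector \<Rightarrow> real) \<Rightarrow> ('a \<times> real) set \<Rightarrow> bool" where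
  "goodG p G \<longleftrightarrow> (0,0) \<in> G \<and> (\<forall>x a b. (x,a) \<in> G \<longrightarrow> (x,b) \<in> G \<longrightarrow> a = b) \<and>
     (\<forall>x a y b. (x,a) \<in> G \<longrightarrow> (y,b) \<in> G \<longrightarrow> (x + y, a + b) \<in> G) \<and>
     (\<forall>x a c. (x,a) \<in> G \<longrightarrow> (c *\<^sub>R x, c * a) \<in> G) \<and>
     (\<forall>x a. (x,a) \<in> G \<longrightarrow> a \<le> p x)"

lemma goodG_chain:
  assumes "C \<in> chains {G. goodG p G}" "C \<noteq> {}"
  shows "goodG p (\<Union>C)"
proof -
  have CA: "\<And>G. G \<in> C \<Longrightarrow> goodG p G" and ch: "\<And>A B. A \<in> C \<Longrightarrow> B \<in> C \<Longrightarrow> A \<subseteq> B \<or> B \<subseteq> A"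
    using assms(1) unfolding chains_def chain_subset_def by auto
  have two: "\<exists>G\<in>C. u \<in> G \<and> v \<in> G" if uC: "u \<in> \<Union>C" and vC: "v \<in> \<Union>C" for u v
  proof -
    obtain A where "A \<in> C" "u \<in> A" using uC by blast
    moreover obtain B where "B \<in> C" "v \<in> B" using vC by blast
    ultimately show ?thesis using ch[of A B] by blast
  qed
  show ?thesis unfolding goodG_def
  proof (intro conjI allI impI)
    obtain G where "G \<in> C" using assms(2) by auto
    then show "(0,0) \<in> \<Union>C" using CA unfolding goodG_def by blast
  next
    fix x a b assume "(x,a) \<in> \<Union>C" "(x,b) \<in> \<Union>C"
    then obtain G where "G \<in> C" "(x,a) \<in> G" "(x,b) \<in> G" using two by blast
    then show "a = b" using CA unfolding goodG_def by blast
  next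
    fix x a y b assume "(x,a) \<in> \<Union>C" "(y,b) \<in> \<Union>C"
    then obtain G where "G \<in> C" "(x,a) \<in> G" "(y,b) \<in> G" using two by blast
    then show "(x + y, a + b) \<in> \<Union>C" using CA unfolding goodG_def by blast
  next
    fix x a c assume "(x,a) \<in> \<Union>C"
    then obtain G where "G \<in> C" "(x,a) \<in> G" by blast
    then show "(c *\<^sub>R x, c * a) \<in> \<Union>C" using CA unfolding goodG_def by blast
  next
    fix x a assume "(x,a) \<in> \<Union>C"
    then obtain G where "G \<in> C" "(x,a) \<in> G" by blast
    then show "a \<le> p x" using CA unfolding goodG_def by blast
  qed
qed

lemma sublin_0: "sublin p \<Longrightarrow> p 0 = 0"
proof -
  assume "sublin p"
  then have "\<forall>c>0. \<forall>x. p (c *\<^sub>R x) = c * p x" unfolding sublin_def by blast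
  moreover have "(0::real) < 2" by simp
  ultimately have "p ((2::real) *\<^sub>R 0) = 2 * p 0" by blast
  moreover have "(2::real) *\<^sub>R (0::'a) = 0" by simp
  ultimately show "p 0 = 0" by simp
qed

lemma goodG_extend:
  assumes sp: "sublin p" and M: "goodG p M" and x0: "\<not> (\<exists>a. (x0,a) \<in> M)"
  shows "\<exists>G. goodG p G \<and> M \<subseteq> G \<and> G \<noteq> M"
proof -
  have M0: "(0,0) \<in> M" and Msv: "\<And>x a b. (x,a) \<in> M \<Longrightarrow> (x,b) \<in> M \<Longrightarrow> a = b"
    and Madd: "\<And>x a y b. (x,a) \<in> M \<Longrightarrow> (y,b) \<in> M \<Longrightarrow> (x + y, a + b) \<in> M"
    and Msc: "\<And>x a c. (x,a) \<in> M \<Longrightarrow> (c *\<^sub>R x, c * a) \<in> M"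
    and Mle: "\<And>x a. (x,a) \<in> M \<Longrightarrow> a \<le> p x"
    using M unfolding goodG_def by blast+
  have padd: "\<And>x y. p (x + y) \<le> p x + p y" and psc: "\<And>c x. 0 < c \<Longrightarrow> p (c *\<^sub>R x) = c * p x"
    using sp unfolding sublin_def by blast+
  define S where "S = {a - p (y - x0) | y a. (y,a) \<in> M}"
  have key: "a1 - p (y1 - x0) \<le> p (y2 + x0) - a2" if "(y1,a1) \<in> M" "(y2,a2) \<in> M" for y1 a1 y2 a2
  proof -
    have "a1 + a2 \<le> p (y1 + y2)" using Madd[OF that] Mle by blast
    also have "\<dots> = p ((y1 - x0) + (y2 + x0))" by (simp add: algebra_simps)
    also have "\<dots> \<le> p (y1 - x0) + p (y2 + x0)" by (rule padd)
    finally show ?thesis by simp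
  qed
  have Sne: "S \<noteq> {}" using M0 unfolding S_def by blast
  have Sbdd: "bdd_above S" unfolding S_def bdd_above_def
    using key[OF _ M0] by auto
  define c where "c = Sup S"
  have c_up: "a - p (y - x0) \<le> c" if "(y,a) \<in> M" for y a
    unfolding c_def using that Sbdd by (intro cSup_upper) (auto simp: S_def)
  have c_low: "c \<le> p (y + x0) - a" if "(y,a) \<in> M" for y a
    unfolding c_def using Sne by (intro cSup_least) (auto simp: S_def intro: key[OF _ that])
  define G where "G = {(y + t *\<^sub>R x0, a + t * c) | y a t. (y,a) \<in> M}"
  have MG: "M \<subseteq> G" unfolding G_def by force
  have x0G: "(x0, c) \<in> G" unfolding G_def using M0 by force
  have "goodG p G" unfolding goodG_def
  proof (intro conjI allI impI)
    show "(0,0) \<in> G" unfolding G_def using M0 by force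
  next
    fix x a b assume xa: "(x,a) \<in> G" and xb: "(x,b) \<in> G"
    obtain y1 a1 t1 where h1: "(y1,a1) \<in> M" "x = y1 + t1 *\<^sub>R x0" "a = a1 + t1 * c"
      using xa unfolding G_def by blast
    obtain y2 a2 t2 where h2: "(y2,a2) \<in> M" "x = y2 + t2 *\<^sub>R x0" "b = a2 + t2 * c"
      using xb unfolding G_def by blast
    note h = h1(1) h2(1) h1(2) h1(3) h2(2) h2(3)
    have "t1 = t2"
    proof (rule ccontr)
      assume ne: "t1 \<noteq> t2"
      have "(y1 - y2, a1 - a2) \<in> M" using Madd[OF h(1) Msc[OF h(2), of "-1"]] by simp
      from Msc[OF this, of "1 / (t2 - t1)"]
      have "((1 / (t2 - t1)) *\<^sub>R (y1 - y2), (1 / (t2 - t1)) * (a1 - a2)) \<in> M" .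
      moreover have "(1 / (t2 - t1)) *\<^sub>R (y1 - y2) = x0"
      proof -
        have "y1 - y2 = (t2 - t1) *\<^sub>R x0" using h(3) h(5) by (simp add: algebra_simps)
        then show ?thesis using ne by simp
      qed
      ultimately show False using x0 by auto
    qed
    then have "y1 = y2" using h by simp
    then have "a1 = a2" using Msv h by blast
    then show "a = b" using h \<open>t1 = t2\<close> by simp
  next
    fix x a y b assume xa: "(x,a) \<in> G" and xb: "(y,b) \<in> G"
    obtain y1 a1 t1 where h1: "(y1,a1) \<in> M" "x = y1 + t1 *\<^sub>R x0" "a = a1 + t1 * c"
      using xa unfolding G_def by blast
    obtain y2 a2 t2 where h2: "(y2,a2) \<in> M" "y = y2 + t2 *\<^sub>R x0" "b = a2 + t2 * c"
      using xb unfolding G_def by blast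
    note h = h1(1) h2(1) h1(2) h1(3) h2(2) h2(3)
    have "x + y = (y1 + y2) + (t1 + t2) *\<^sub>R x0" "a + b = (a1 + a2) + (t1 + t2) * c"
      using h by (auto simp: algebra_simps)
    then show "(x + y, a + b) \<in> G" unfolding G_def using Madd[OF h(1,2)] by blast
  next
    fix x a r assume "(x,a) \<in> G"
    then obtain y1 a1 t1 where h: "(y1,a1) \<in> M" "x = y1 + t1 *\<^sub>R x0" "a = a1 + t1 * c"
      unfolding G_def by auto
    have "r *\<^sub>R x = r *\<^sub>R y1 + (r * t1) *\<^sub>R x0" "r * a = r * a1 + (r * t1) * c"
      using h by (auto simp: algebra_simps)
    then show "(r *\<^sub>R x, r * a) \<in> G" unfolding G_def using Msc[OF h(1)] by blast
  next
    fix x a assume "(x,a) \<in> G"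
    then obtain y a1 t where h: "(y,a1) \<in> M" "x = y + t *\<^sub>R x0" "a = a1 + t * c"
      unfolding G_def by auto
    show "a \<le> p x"
    proof (cases "t = 0")
      case True then show ?thesis using h Mle by simp
    next
      case False
      show ?thesis
      proof (cases "t > 0")
        case True
        have "((1/t) *\<^sub>R y, (1/t) * a1) \<in> M" using Msc[OF h(1)] .
        from c_low[OF this] have cle: "c \<le> p ((1/t) *\<^sub>R y + x0) - (1/t) * a1" .
        have peq: "p (y + t *\<^sub>R x0) = t * p ((1/t) *\<^sub>R y + x0)"
        proof -
          have e: "y + t *\<^sub>R x0 = t *\<^sub>R ((1/t) *\<^sub>R y + x0)" using True by (simp add: scaleR_add_right)
          show ?thesis unfolding e by (rule psc[OF True])
        qed
        have "t * c \<le> t * (p ((1/t) *\<^sub>R y + x0) - (1/t) * a1)"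
          by (rule mult_left_mono[OF cle]) (use True in linarith)
        also have "\<dots> = t * p ((1/t) *\<^sub>R y + x0) - a1" using True by (simp add: right_diff_distrib)
        finally have "t * c \<le> p (y + t *\<^sub>R x0) - a1" using peq by linarith
        then show ?thesis using h by simp
      next
        case False
        define s where "s = - t"
        have s0: "s > 0" using False \<open>t \<noteq> 0\<close> unfolding s_def by simp
        have "((1/s) *\<^sub>R y, (1/s) * a1) \<in> M" using Msc[OF h(1)] .
        from c_up[OF this] have cle: "(1/s) * a1 - p ((1/s) *\<^sub>R y - x0) \<le> c" .
        have peq: "p (y + t *\<^sub>R x0) = s * p ((1/s) *\<^sub>R y - x0)"
        proof -
          have e: "y + t *\<^sub>R x0 = s *\<^sub>R ((1/s) *\<^sub>R y - x0)" using s0 by (simp add: s_def scaleR_diff_right)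
          show ?thesis unfolding e by (rule psc[OF s0])
        qed
        have "s * ((1/s) * a1 - p ((1/s) *\<^sub>R y - x0)) \<le> s * c"
          by (rule mult_left_mono[OF cle]) (use s0 in linarith)
        moreover have "s * ((1/s) * a1 - p ((1/s) *\<^sub>R y - x0)) = a1 - s * p ((1/s) *\<^sub>R y - x0)"
          using s0 by (simp add: right_diff_distrib)
        ultimately have "a1 + t * c \<le> p (y + t *\<^sub>R x0)" using peq by (simp add: s_def)
        then show ?thesis using h by simp
      qed
    qed
  qed
  moreover have "G \<noteq> M" using x0G x0 by blast
  ultimately show ?thesis using MG by blast
qed

lemma hahn_banach_sublin:
  fixes p :: "'a::real_vector \<Rightarrow> real"
  assumes sp: "sublin p"
  shows "\<exists>\<psi>. (\<forall>x y. \<psi> (x + y) = \<psi> x + \<psi> y) \<and> (\<forall>c x. \<psi> (c *\<^sub>R x) = c * \<psi> x) \<and> (\<forall>x. \<psi> x \<le> p x)"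
proof -
  have g0: "goodG p {(0,0)}" unfolding goodG_def using sublin_0[OF sp] by auto
  have "\<forall>C\<in>chains {G. goodG p G}. \<exists>U\<in>{G. goodG p G}. \<forall>X\<in>C. X \<subseteq> U"
  proof
    fix C assume C: "C \<in> chains {G. goodG p G}"
    show "\<exists>U\<in>{G. goodG p G}. \<forall>X\<in>C. X \<subseteq> U"
    proof (cases "C = {}")
      case True then show ?thesis using g0 by auto
    next
      case False then show ?thesis using goodG_chain[OF C False] by blast
    qed
  qed
  from Zorn_Lemma2[OF this] obtain M where M: "goodG p M"
    and max: "\<And>X. goodG p X \<Longrightarrow> M \<subseteq> X \<Longrightarrow> X = M" by blast
  have tot: "\<exists>a. (x,a) \<in> M" for x
    using goodG_extend[OF sp M, of x] max by blast
  have Msv: "\<And>x a b. (x,a) \<in> M \<Longrightarrow> (x,b) \<in> M \<Longrightarrow> a = b"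
    and Madd: "\<And>x a y b. (x,a) \<in> M \<Longrightarrow> (y,b) \<in> M \<Longrightarrow> (x + y, a + b) \<in> M"
    and Msc: "\<And>x a c. (x,a) \<in> M \<Longrightarrow> (c *\<^sub>R x, c * a) \<in> M"
    and Mle: "\<And>x a. (x,a) \<in> M \<Longrightarrow> a \<le> p x"
    using M unfolding goodG_def by blast+
  define \<psi> where "\<psi> x = (THE a. (x,a) \<in> M)" for x
  have psiM: "(x, \<psi> x) \<in> M" for x
    unfolding \<psi>_def using tot[of x] Msv by (metis theI)
  have psi_eq: "(x,a) \<in> M \<Longrightarrow> \<psi> x = a" for x a using psiM Msv by blast
  show ?thesis
  proof (intro exI conjI allI)
    fix x y show "\<psi> (x + y) = \<psi> x + \<psi> y" using psi_eq[OF Madd[OF psiM psiM]] .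
  next
    fix c x show "\<psi> (c *\<^sub>R x) = c * \<psi> x" using psi_eq[OF Msc[OF psiM]] .
  next
    fix x show "\<psi> x \<le> p x" using Mle[OF psiM] .
  qed
qed

lemma separation_norm:
  fixes C :: "'a::real_normed_vector set"
  assumes cvx: "convex C" and far: "\<And>w. w \<in> C \<Longrightarrow> r \<le> norm w"
  shows "\<exists>\<psi>. bounded_linear \<psi> \<and> (\<forall>z. \<bar>\<psi> z\<bar> \<le> norm z) \<and> (\<forall>w\<in>C. r \<le> \<psi> w)"
proof -
  define S where "S z = {norm (z + t *\<^sub>R w) - t * r | t w. 0 \<le> t \<and> (w \<in> C \<or> t = 0)}" for z
  define p where "p z = Inf (S z)" for z
  have S_low: "- norm z \<le> a" if aS: "a \<in> S z" for z a
  proof -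
    obtain t w where a: "a = norm (z + t *\<^sub>R w) - t * r" "0 \<le> t" "w \<in> C \<or> t = 0"
      using aS unfolding S_def by blast
    have "t * r \<le> t * norm w" if "w \<in> C" using far[OF that] a(2) by (rule mult_left_mono)
    then have "t * r \<le> norm (t *\<^sub>R w)" using a(2,3) by auto
    moreover have "norm (t *\<^sub>R w) \<le> norm (z + t *\<^sub>R w) + norm z"
      using norm_triangle_ineq4[of "z + t *\<^sub>R w" z] by simp
    ultimately show ?thesis using a(1) by linarith
  qed
  have S_norm: "norm z \<in> S z" for z unfolding S_def by force
  have S_ne: "S z \<noteq> {}" for z using S_norm by blast
  have S_bdd: "bdd_below (S z)" for z using S_low unfolding bdd_below_def by blast
  have p_le: "p z \<le> a" if "a \<in> S z" for z a unfolding p_def using that S_bdd by (rule cInf_lower)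
  have p_ge: "b \<le> p z" if "\<And>a. a \<in> S z \<Longrightarrow> b \<le> a" for z b
    unfolding p_def using S_ne that by (rule cInf_greatest)
  have sum_S: "\<exists>b\<in>S (z1 + z2). b \<le> a1 + a2" if aS1: "a1 \<in> S z1" and aS2: "a2 \<in> S z2" for z1 z2 a1 a2
  proof -
    obtain t1 w1 where a1: "a1 = norm (z1 + t1 *\<^sub>R w1) - t1 * r" "0 \<le> t1" "w1 \<in> C \<or> t1 = 0"
      using aS1 unfolding S_def by blast
    obtain t2 w2 where a2: "a2 = norm (z2 + t2 *\<^sub>R w2) - t2 * r" "0 \<le> t2" "w2 \<in> C \<or> t2 = 0"
      using aS2 unfolding S_def by blast
    define t where "t = t1 + t2"
    define w where "w = (t1 / t) *\<^sub>R w1 + (t2 / t) *\<^sub>R w2"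
    have t0: "0 \<le> t" unfolding t_def using a1 a2 by simp
    have wC: "w \<in> C \<or> t = 0"
    proof (cases "t = 0")
      case False
      then have tp: "t > 0" using t0 by simp
      show ?thesis
      proof (cases "t1 = 0")
        case True then have "w = w2" using False unfolding w_def t_def by simp
        then show ?thesis using a2(3) True False unfolding t_def by auto
      next
        case f1: False
        show ?thesis
        proof (cases "t2 = 0")
          case True then have "w = w1" using False unfolding w_def t_def by simp
          then show ?thesis using a1(3) True False unfolding t_def by auto
        next
          case False
          have "w1 \<in> C" "w2 \<in> C" using a1(3) a2(3) f1 False by auto
          moreover have "t1 / t + t2 / t = 1" using tp unfolding t_def by (simp add: add_divide_distrib[symmetric])
          ultimately have "w \<in> C" unfolding w_def using cvx a1(2) a2(2) tp
            by (intro convexD) auto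
          then show ?thesis by simp
        qed
      qed
    qed simp
    have tw: "t *\<^sub>R w = t1 *\<^sub>R w1 + t2 *\<^sub>R w2"
    proof (cases "t = 0")
      case True then have "t1 = 0" "t2 = 0" using a1(2) a2(2) unfolding t_def by auto
      then show ?thesis using True by simp
    next
      case False then show ?thesis unfolding w_def by (simp add: scaleR_add_right)
    qed
    have "norm (z1 + z2 + t *\<^sub>R w) - t * r \<in> S (z1 + z2)" unfolding S_def using t0 wC by blast
    moreover have "norm (z1 + z2 + t *\<^sub>R w) \<le> norm (z1 + t1 *\<^sub>R w1) + norm (z2 + t2 *\<^sub>R w2)"
    proof -
      have "z1 + z2 + t *\<^sub>R w = (z1 + t1 *\<^sub>R w1) + (z2 + t2 *\<^sub>R w2)" using tw by (simp add: algebra_simps)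
      then show ?thesis by (metis norm_triangle_ineq)
    qed
    moreover have "t * r = t1 * r + t2 * r" unfolding t_def by (simp add: distrib_right)
    ultimately show ?thesis using a1(1) a2(1)
      by (intro bexI[of _ "norm (z1 + z2 + t *\<^sub>R w) - t * r"]) linarith+
  qed
  have p_add: "p (z1 + z2) \<le> p z1 + p z2" for z1 z2
  proof -
    have "p (z1 + z2) - a2 \<le> p z1" if a2S: "a2 \<in> S z2" for a2
    proof (rule p_ge)
      fix a1 assume a1S: "a1 \<in> S z1"
      obtain b where "b \<in> S (z1 + z2)" "b \<le> a1 + a2" using sum_S[OF a1S a2S] by blast
      then show "p (z1 + z2) - a2 \<le> a1" using p_le by fastforce
    qed
    then have "p (z1 + z2) - p z1 \<le> p z2" by (intro p_ge) (auto simp: algebra_simps)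
    then show ?thesis by simp
  qed
  have scale_S: "c * a \<in> S (c *\<^sub>R z)" if aS: "a \<in> S z" and c0: "c > 0" for c a z
  proof -
    obtain t w where a: "a = norm (z + t *\<^sub>R w) - t * r" "0 \<le> t" "w \<in> C \<or> t = 0"
      using aS unfolding S_def by blast
    have "c * a = norm (c *\<^sub>R z + (c * t) *\<^sub>R w) - (c * t) * r"
    proof -
      have e: "c *\<^sub>R z + (c * t) *\<^sub>R w = c *\<^sub>R (z + t *\<^sub>R w)" by (simp add: scaleR_add_right)
      have "norm (c *\<^sub>R z + (c * t) *\<^sub>R w) = c * norm (z + t *\<^sub>R w)" unfolding e using c0 by simp
      moreover have "c * a = c * norm (z + t *\<^sub>R w) - c * t * r" unfolding a(1) by (simp add: right_diff_distrib mult.assoc)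
      ultimately show ?thesis by simp
    qed
    moreover have "0 \<le> c * t" "w \<in> C \<or> c * t = 0" using a(2,3) c0 by auto
    ultimately show ?thesis unfolding S_def by blast
  qed
  have p_sc_le: "p (c *\<^sub>R z) \<le> c * p z" if "c > 0" for c z
  proof -
    have "p (c *\<^sub>R z) / c \<le> p z"
    proof (rule p_ge)
      fix a assume "a \<in> S z"
      then have "p (c *\<^sub>R z) \<le> c * a" using scale_S that p_le by blast
      then show "p (c *\<^sub>R z) / c \<le> a" using that by (simp add: divide_le_eq mult.commute)
    qed
    then show ?thesis using that by (simp add: divide_le_eq mult.commute)
  qed
  have p_sc: "p (c *\<^sub>R z) = c * p z" if "c > 0" for c z
  proof -
    have "p z = p ((1/c) *\<^sub>R (c *\<^sub>R z))" using that by simp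
    also have "\<dots> \<le> (1/c) * p (c *\<^sub>R z)" using that by (intro p_sc_le) auto
    finally have "c * p z \<le> p (c *\<^sub>R z)" using that by (simp add: field_simps)
    then show ?thesis using p_sc_le[OF that, of z] by linarith
  qed
  have "sublin p" unfolding sublin_def using p_add p_sc by blast
  from hahn_banach_sublin[OF this] obtain \<psi> where
    add: "\<And>x y. \<psi> (x + y) = \<psi> x + \<psi> y" and sc: "\<And>c x. \<psi> (c *\<^sub>R x) = c * \<psi> x"
    and le: "\<And>x. \<psi> x \<le> p x" by blast
  have le_norm: "\<psi> z \<le> norm z" for z using le[of z] p_le[OF S_norm[of z]] by simp
  have abs_le: "\<bar>\<psi> z\<bar> \<le> norm z" for z
  proof -
    have "\<psi> (- z) = - \<psi> z" using sc[of "-1" z] by simp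
    then show ?thesis using le_norm[of z] le_norm[of "-z"] by simp
  qed
  have bl: "bounded_linear \<psi>"
    by (rule bounded_linear_intro[where K=1]) (use add sc abs_le in auto)
  have "r \<le> \<psi> w" if "w \<in> C" for w
  proof -
    have "norm (- w + 1 *\<^sub>R w) - 1 * r \<in> S (- w)" unfolding S_def
      using that by (intro CollectI exI[of _ "1::real"] exI[of _ w]) simp
    then have "p (- w) \<le> - r" using p_le by fastforce
    moreover have "\<psi> (- w) = - \<psi> w" using sc[of "-1" w] by simp
    ultimately show ?thesis using le[of "-w"] by simp
  qed
  then show ?thesis using bl abs_le by blast
qed

lemma norming_functional:
  fixes z :: "'a::real_normed_vector"
  shows "\<exists>\<psi>. bounded_linear \<psi> \<and> (\<forall>w. \<bar>\<psi> w\<bar> \<le> norm w) \<and> \<psi> z = norm z"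
proof -
  obtain \<psi> where "bounded_linear \<psi>" "\<forall>w. \<bar>\<psi> w\<bar> \<le> norm w" "\<forall>w\<in>{z}. norm z \<le> \<psi> w"
    using separation_norm[of "{z}" "norm z"] by auto
  moreover have "\<psi> z \<le> norm z" using calculation(2) by (metis abs_le_D1)
  ultimately show ?thesis by (intro exI[of _ \<psi>]) auto
qed

lemma wc_subseq: "weakly_convergent_to s x \<Longrightarrow> strict_mono r \<Longrightarrow> weakly_convergent_to (s \<circ> r) x"
  unfolding weakly_convergent_to_def
  by (auto intro: LIMSEQ_subseq_LIMSEQ[unfolded comp_def] simp: comp_def)

lemma wc_shift: "weakly_convergent_to s x \<Longrightarrow> weakly_convergent_to (\<lambda>n. s (n + K)) x"
  unfolding weakly_convergent_to_def
  by (auto intro: LIMSEQ_ignore_initial_segment)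

lemma wc_diff: "weakly_convergent_to s x \<Longrightarrow> weakly_convergent_to (\<lambda>n. s n - c) (x - c)"
  unfolding weakly_convergent_to_def
  by (auto simp: linear_simps intro!: tendsto_diff)

lemma wc_norm: "s \<longlonglongrightarrow> x \<Longrightarrow> weakly_convergent_to s x"
  unfolding weakly_convergent_to_def
  by (auto intro: bounded_linear.tendsto)

lemma wc_scale:
  assumes "a \<longlonglongrightarrow> \<alpha>" "weakly_convergent_to s x"
  shows "weakly_convergent_to (\<lambda>n. a n *\<^sub>R s n) (\<alpha> *\<^sub>R x)"
  using assms unfolding weakly_convergent_to_def
  by (auto simp: linear_simps intro!: tendsto_mult)

lemma wc_close:
  assumes "weakly_convergent_to s x" "(\<lambda>n. s n - u n) \<longlonglongrightarrow> 0"
  shows "weakly_convergent_to u x"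
  unfolding weakly_convergent_to_def
proof (intro allI impI)
  fix \<phi> :: "'a \<Rightarrow> real" assume bl: "bounded_linear \<phi>"
  have "(\<lambda>n. \<phi> (s n - u n)) \<longlonglongrightarrow> \<phi> 0" using bounded_linear.tendsto[OF bl assms(2)] .
  then have "(\<lambda>n. \<phi> (s n) - \<phi> (s n - u n)) \<longlonglongrightarrow> \<phi> x - 0"
    using assms(1) bl unfolding weakly_convergent_to_def
    by (intro tendsto_diff) (auto simp: linear_simps)
  moreover have "\<phi> (s n) - \<phi> (s n - u n) = \<phi> (u n)" for n using bl by (simp add: linear_simps)
  ultimately show "(\<lambda>n. \<phi> (u n)) \<longlonglongrightarrow> \<phi> x" by simp
qed

lemma wc_unique:
  fixes a b :: "'a::real_normed_vector"
  assumes "weakly_convergent_to s a" "weakly_convergent_to s b"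
  shows "a = b"
proof -
  obtain \<psi> where bl: "bounded_linear \<psi>" and e: "\<psi> (a - b) = norm (a - b)"
    using norming_functional[of "a - b"] by blast
  have "(\<lambda>n. \<psi> (s n)) \<longlonglongrightarrow> \<psi> a" "(\<lambda>n. \<psi> (s n)) \<longlonglongrightarrow> \<psi> b"
    using assms bl unfolding weakly_convergent_to_def by auto
  then have "\<psi> a = \<psi> b" using LIMSEQ_unique by blast
  then have "norm (a - b) = 0" using e bl by (simp add: linear_simps)
  then show ?thesis by simp
qed

lemma wc_lsc:
  assumes "weakly_convergent_to s y" "\<delta> > 0"
  shows "eventually (\<lambda>n. norm y - \<delta> < norm (s n)) sequentially"
proof -
  obtain \<psi> where bl: "bounded_linear \<psi>" and ab: "\<forall>w. \<bar>\<psi> w\<bar> \<le> norm w" and e: "\<psi> y = norm y"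
    using norming_functional[of y] by blast
  have "(\<lambda>n. \<psi> (s n)) \<longlonglongrightarrow> norm y" using assms(1) bl e unfolding weakly_convergent_to_def by metis
  then have "eventually (\<lambda>n. norm y - \<delta> < \<psi> (s n)) sequentially"
    using assms(2) by (intro order_tendstoD(1)) auto
  then show ?thesis
    by eventually_elim (use ab in \<open>meson abs_le_D1 less_le_trans\<close>)
qed

lemma mazur:
  fixes V :: "'a::real_normed_vector set"
  assumes cl: "closed V" and cv: "convex V" and sV: "\<And>n. s n \<in> V" and wc: "weakly_convergent_to s y"
  shows "y \<in> V"
proof (rule ccontr)
  assume yV: "y \<notin> V"
  obtain r where r0: "r > 0" and rb: "ball y r \<subseteq> - V"
    using cl yV open_contains_ball[of "- V"] by auto
  define C where "C = (\<lambda>v. v - y) ` V"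
  have cC: "convex C" unfolding C_def using cv
    by (simp add: convex_translation_subtract)
  have far: "r \<le> norm w" if wC: "w \<in> C" for w
  proof -
    obtain v where v: "v \<in> V" "w = v - y" using wC unfolding C_def by blast
    then have "v \<notin> ball y r" using rb by blast
    then show ?thesis using v by (simp add: dist_norm norm_minus_commute)
  qed
  obtain \<psi> where bl: "bounded_linear \<psi>" and sep: "\<forall>w\<in>C. r \<le> \<psi> w"
    using separation_norm[OF cC far] by blast
  have ge: "r \<le> \<psi> (s n) - \<psi> y" for n
    using sep sV[of n] bl unfolding C_def by (auto simp: linear_simps)
  have "(\<lambda>n. \<psi> (s n) - \<psi> y) \<longlonglongrightarrow> \<psi> y - \<psi> y"
    using wc bl unfolding weakly_convergent_to_def by (intro tendsto_diff) auto
  then have "r \<le> 0" using ge by (intro LIMSEQ_le_const) auto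
  then show False using r0 by simp
qed

primrec pick_seq :: "(nat \<Rightarrow> nat \<Rightarrow> bool) \<Rightarrow> nat \<Rightarrow> nat" where
  "pick_seq P 0 = (SOME n. P 0 n)"
| "pick_seq P (Suc k) = (SOME n. pick_seq P k < n \<and> P (Suc k) n)"

lemma pick_subseq:
  fixes P :: "nat \<Rightarrow> nat \<Rightarrow> bool"
  assumes "\<And>k N. \<exists>n\<ge>N. P k n"
  shows "\<exists>h. strict_mono h \<and> (\<forall>k. P k (h k))"
proof -
  have 0: "P 0 (pick_seq P 0)" using assms[of 0 0] by (auto intro: someI_ex)
  have S: "pick_seq P k < pick_seq P (Suc k) \<and> P (Suc k) (pick_seq P (Suc k))" for k
  proof -
    obtain n where "n \<ge> Suc (pick_seq P k)" "P (Suc k) n" using assms by blast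
    then have "\<exists>n. pick_seq P k < n \<and> P (Suc k) n" using Suc_le_lessD by blast
    then show ?thesis unfolding pick_seq.simps by (rule someI_ex)
  qed
  have "strict_mono (pick_seq P)" using S by (intro strict_mono_Suc_iff[THEN iffD2]) auto
  moreover have "P k (pick_seq P k)" for k using 0 S by (cases k) auto
  ultimately show ?thesis by blast
qed

lemma tail_bound:
  fixes c b :: "nat \<Rightarrow> real"
  assumes c0: "\<And>n. 0 \<le> c n" and cs: "\<And>M. sum c {..<M} \<le> 1"
    and bB: "\<And>n. \<bar>b n\<bar> \<le> B" and be: "\<And>n. n \<ge> N \<Longrightarrow> \<bar>b n\<bar> \<le> e"
  shows "summable (\<lambda>n. c n * b n)"
    and "\<bar>(\<Sum>n. c n * b n) - (\<Sum>n<N. c n * b n)\<bar> \<le> e"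
proof -
  have sc: "summable c" using c0 cs by (rule summableI_nonneg_bounded)
  have sa: "summable (\<lambda>n. \<bar>c n * b n\<bar>)"
  proof (rule summable_comparison_test[where g="\<lambda>n. B * c n"])
    have "\<bar>c n * b n\<bar> \<le> B * c n" for n
      using mult_left_mono[OF bB[of n] c0[of n]] c0[of n] by (simp add: abs_mult mult.commute)
    then show "\<exists>N. \<forall>n\<ge>N. norm \<bar>c n * b n\<bar> \<le> B * c n" by simp
    show "summable (\<lambda>n. B * c n)" using sc by (rule summable_mult)
  qed
  then show sg: "summable (\<lambda>n. c n * b n)" by (rule summable_rabs_cancel)
  have e0: "0 \<le> e" using be[of N] by simp
  have "(\<Sum>n. c n * b n) - (\<Sum>n<N. c n * b n) = (\<Sum>m. c (m + N) * b (m + N))"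
    using suminf_split_initial_segment[OF sg, of N] by simp
  moreover have "\<bar>\<Sum>m. c (m + N) * b (m + N)\<bar> \<le> (\<Sum>m. \<bar>c (m + N) * b (m + N)\<bar>)"
    by (rule summable_rabs) (use summable_ignore_initial_segment[OF sa, of N] in simp)
  moreover have "(\<Sum>m. \<bar>c (m + N) * b (m + N)\<bar>) \<le> (\<Sum>m. e * c (m + N))"
  proof (rule suminf_le)
    fix m show "\<bar>c (m + N) * b (m + N)\<bar> \<le> e * c (m + N)"
      using mult_left_mono[OF be[of "m + N"] c0[of "m + N"]] c0[of "m + N"] by (simp add: abs_mult mult.commute)
  next
    show "summable (\<lambda>m. \<bar>c (m + N) * b (m + N)\<bar>)" using summable_ignore_initial_segment[OF sa, of N] by simp
  next
    show "summable (\<lambda>m. e * c (m + N))" using summable_ignore_initial_segment[OF sc, of N] by (rule summable_mult)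
  qed
  moreover have "(\<Sum>m. e * c (m + N)) = e * (\<Sum>m. c (m + N))"
    using suminf_mult[OF summable_ignore_initial_segment[OF sc, of N], of e] by simp
  moreover have T1: "(\<Sum>m. c (m + N)) \<le> 1"
  proof -
    have "(\<Sum>m. c (m + N)) = suminf c - sum c {..<N}"
      using suminf_split_initial_segment[OF sc, of N] by simp
    moreover have "0 \<le> sum c {..<N}" using c0 by (simp add: sum_nonneg)
    moreover have "suminf c \<le> 1" using sc cs by (rule suminf_le_const)
    ultimately show ?thesis by simp
  qed
  moreover have "e * (\<Sum>m. c (m + N)) \<le> e" using mult_left_mono[OF T1 e0] by simp
  ultimately show "\<bar>(\<Sum>n. c n * b n) - (\<Sum>n<N. c n * b n)\<bar> \<le> e"
    by linarith
qed

lemma series_limit: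
  fixes L :: "nat \<Rightarrow> nat \<Rightarrow> real" and \<mu> a :: "nat \<Rightarrow> real"
  assumes L0: "\<And>k n. 0 \<le> L k n" and Ls: "\<And>k M. sum (L k) {..<M} \<le> 1"
    and Lc: "\<And>n. (\<lambda>k. L k n) \<longlonglongrightarrow> \<mu> n"
    and \<mu>0: "\<And>n. 0 \<le> \<mu> n" and \<mu>s: "\<And>M. sum \<mu> {..<M} \<le> 1"
    and a: "a \<longlonglongrightarrow> 0"
  shows "(\<lambda>k. \<Sum>n. L k n * a n) \<longlonglongrightarrow> (\<Sum>n. \<mu> n * a n)"
proof (rule LIMSEQ_I)
  fix r :: real assume r: "0 < r"
  have "Bseq a" using a by (intro convergent_imp_Bseq) (auto simp: convergent_def)
  then obtain B where B0: "\<forall>n. norm (a n) \<le> B" by (auto elim!: BseqE)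
  then have B: "\<And>n. \<bar>a n\<bar> \<le> B" by simp
  obtain N where N: "\<And>n. n \<ge> N \<Longrightarrow> \<bar>a n\<bar> < r / 3"
    using LIMSEQ_D[OF a, of "r/3"] r by auto
  have Nle: "\<And>n. n \<ge> N \<Longrightarrow> \<bar>a n\<bar> \<le> r / 3" using N less_imp_le by blast
  have hd: "(\<lambda>k. \<Sum>n<N. L k n * a n) \<longlonglongrightarrow> (\<Sum>n<N. \<mu> n * a n)"
    by (intro tendsto_sum tendsto_mult Lc tendsto_const)
  obtain K where K: "\<And>k. k \<ge> K \<Longrightarrow> norm ((\<Sum>n<N. L k n * a n) - (\<Sum>n<N. \<mu> n * a n)) < r / 3"
    using LIMSEQ_D[OF hd, of "r/3"] r by auto
  have "norm ((\<Sum>n. L k n * a n) - (\<Sum>n. \<mu> n * a n)) < r" if "k \<ge> K" for k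
  proof -
    have t1: "\<bar>(\<Sum>n. L k n * a n) - (\<Sum>n<N. L k n * a n)\<bar> \<le> r / 3"
      by (rule tail_bound(2)[OF L0 Ls B Nle])
    have t2: "\<bar>(\<Sum>n. \<mu> n * a n) - (\<Sum>n<N. \<mu> n * a n)\<bar> \<le> r / 3"
      by (rule tail_bound(2)[OF \<mu>0 \<mu>s B Nle])
    have t3: "\<bar>(\<Sum>n<N. L k n * a n) - (\<Sum>n<N. \<mu> n * a n)\<bar> < r / 3" using K[OF that] by simp
    show ?thesis using t1 t2 t3 unfolding real_norm_def by linarith
  qed
  then show "\<exists>no. \<forall>k\<ge>no. norm ((\<Sum>n. L k n * a n) - (\<Sum>n. \<mu> n * a n)) < r" by blast
qed

lemma kk_scaled:
  fixes u :: "nat \<Rightarrow> 'a::real_normed_vector"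
  assumes kk: "kadec_klee TYPE('a)" and wc: "weakly_convergent_to u z"
    and nt: "(\<lambda>k. norm (u k)) \<longlonglongrightarrow> norm z"
  shows "\<exists>K. (\<lambda>k. u (k + K)) \<longlonglongrightarrow> z"
proof (cases "z = 0")
  case True
  then have "u \<longlonglongrightarrow> z" using nt by (simp add: tendsto_norm_zero_iff)
  then show ?thesis by (intro exI[of _ 0]) simp
next
  case False
  then have "norm z > 0" by simp
  then have "eventually (\<lambda>k. 0 < norm (u k)) sequentially" using order_tendstoD(1)[OF nt] by blast
  then obtain K where K: "\<And>k. k \<ge> K \<Longrightarrow> 0 < norm (u k)" unfolding eventually_sequentially by blast
  define u' where "u' k = u (k + K)" for k
  have u'pos: "0 < norm (u' k)" for k unfolding u'_def using K by simp
  have nt': "(\<lambda>k. norm (u' k)) \<longlonglongrightarrow> norm z" unfolding u'_def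
    using LIMSEQ_ignore_initial_segment[OF nt, of K] .
  have wc': "weakly_convergent_to u' z" unfolding u'_def using wc_shift[OF wc] .
  define q where "q k = (1 / norm (u' k)) *\<^sub>R u' k" for k
  have inv: "(\<lambda>k. 1 / norm (u' k)) \<longlonglongrightarrow> 1 / norm z"
    using nt' False by (intro tendsto_divide) auto
  have wq: "weakly_convergent_to q ((1 / norm z) *\<^sub>R z)"
    unfolding q_def using wc_scale[OF inv wc'] .
  have nq: "norm (q k) = 1" for k unfolding q_def using u'pos[of k] by simp
  have nz: "norm ((1 / norm z) *\<^sub>R z) = 1" using False by simp
  have "q \<longlonglongrightarrow> (1 / norm z) *\<^sub>R z"
    using kk nq nz wq unfolding kadec_klee_def by blast
  then have "(\<lambda>k. norm (u' k) *\<^sub>R q k) \<longlonglongrightarrow> norm z *\<^sub>R ((1 / norm z) *\<^sub>R z)"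
    using nt' by (intro tendsto_scaleR)
  moreover have "(\<lambda>k. norm (u' k) *\<^sub>R q k) = u'" unfolding q_def using u'pos by (intro ext) simp
  moreover have "norm z *\<^sub>R ((1 / norm z) *\<^sub>R z) = z" using False by simp
  ultimately have "u' \<longlonglongrightarrow> z" by simp
  then show ?thesis unfolding u'_def by blast
qed

lemma F_cwm_props:
  assumes "f \<in> F_cwm F"
  shows "\<And>\<phi>. \<phi> \<in> linf_plus F \<Longrightarrow> 0 \<le> f \<phi>"
    and "\<And>\<phi>1 \<phi>2. \<phi>1 \<in> linf_plus F \<Longrightarrow> \<phi>2 \<in> linf_plus F \<Longrightarrow> (\<forall>t\<in>F. \<phi>1 t \<le> \<phi>2 t) \<Longrightarrow> f \<phi>1 \<le> f \<phi>2"
    and "\<And>\<phi>1 \<phi>2. \<phi>1 \<in> linf_plus F \<Longrightarrow> \<phi>2 \<in> linf_plus F \<Longrightarrow> (\<forall>t\<in>F. \<phi>1 t < \<phi>2 t) \<Longrightarrow> f \<phi>1 < f \<phi>2"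
  using assms unfolding F_cwm_def by blast+

lemma kk_imp_sacp:
  fixes V :: "'a::banach set"
  assumes kk: "kadec_klee TYPE('a)" and cl: "closed V" and cv: "convex V"
    and ws: "weak_SACP_cwm V"
  shows "norm_SACP_cwm V"
  unfolding norm_SACP_cwm_def SACP_cwm_def
proof (intro allI impI ballI)
  fix F :: "'a set" and f v
  assume F: "finite F \<and> F \<noteq> {}" and f: "f \<in> F_cwm F"
    and vv: "(\<forall>n. v n \<in> V) \<and> (\<lambda>n. r_f f (v n) F) \<longlonglongrightarrow> rad_f f V F"
  have S: "SACP_cwm weakly_convergent_to V" using ws unfolding weak_SACP_cwm_def .
  obtain g y where g: "strict_mono g" and wy: "weakly_convergent_to (v \<circ> g) y"
    using S[unfolded SACP_cwm_def, rule_format, OF F f vv] by blast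
  define w where "w = v \<circ> g"
  have wV: "w n \<in> V" for n unfolding w_def using vv by simp
  have wy': "weakly_convergent_to w y" unfolding w_def using wy .
  have yV: "y \<in> V" by (rule mazur[OF cl cv, of w]) (use wV wy' in auto)
  define dv where "dv z = (\<lambda>t. if t \<in> F then norm (z - t) else 0)" for z
  have dvL: "dv z \<in> linf_plus F" for z unfolding dv_def linf_plus_def by auto
  have rf: "r_f f z F = f (dv z)" for z unfolding r_f_def dv_def by simp
  note fnn = F_cwm_props(1)[OF f] and fmono = F_cwm_props(2)[OF f] and fstr = F_cwm_props(3)[OF f]
  define R where "R = rad_f f V F"
  have Rle: "R \<le> f (dv y)"
    unfolding R_def rad_f_def rf[symmetric]
    by (rule cINF_lower[OF _ yV]) (auto simp: bdd_below_def rf intro!: exI[of _ 0] fnn dvL)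
  have lim: "(\<lambda>n. f (dv (w n))) \<longlonglongrightarrow> R"
    using LIMSEQ_subseq_LIMSEQ[OF conjunct2[OF vv] g] unfolding R_def w_def rf comp_def .
  have "\<exists>i\<in>F. \<forall>\<delta>>0. \<forall>N. \<exists>n\<ge>N. norm (w n - i) < norm (y - i) + \<delta>"
  proof (rule ccontr)
    assume "\<not> ?thesis"
    then have "\<forall>i\<in>F. \<exists>\<delta>. \<delta> > 0 \<and> (\<exists>N. \<forall>n\<ge>N. norm (y - i) + \<delta> \<le> norm (w n - i))"
      by (auto simp: not_less)
    then obtain D where D: "\<forall>i\<in>F. D i > 0 \<and> (\<exists>N. \<forall>n\<ge>N. norm (y - i) + D i \<le> norm (w n - i))"
      by metis
    then obtain Nf where Nf: "\<forall>i\<in>F. \<forall>n\<ge>Nf i. norm (y - i) + D i \<le> norm (w n - i)"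
      by metis
    define \<phi> where "\<phi> = (\<lambda>t. if t \<in> F then norm (y - t) + D t / 2 else 0)"
    have \<phi>L: "\<phi> \<in> linf_plus F" unfolding \<phi>_def linf_plus_def using D
      by (auto intro: add_nonneg_nonneg less_imp_le)
    have lt: "f (dv y) < f \<phi>" using D by (intro fstr[OF dvL \<phi>L]) (auto simp: dv_def \<phi>_def)
    define N where "N = Max (Nf ` F)"
    have "f \<phi> \<le> f (dv (w n))" if "n \<ge> N" for n
    proof (rule fmono[OF \<phi>L dvL], intro ballI)
      fix t assume tF: "t \<in> F"
      have "Nf t \<le> N" unfolding N_def using F tF by auto
      then have "norm (y - t) + D t \<le> norm (w n - t)" using Nf tF that by auto
      then show "\<phi> t \<le> dv (w n) t" using D tF unfolding \<phi>_def dv_def by auto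
    qed
    then have "f \<phi> \<le> R" using lim by (intro LIMSEQ_le_const[OF lim]) auto
    then show False using lt Rle by simp
  qed
  then obtain i where iF: "i \<in> F" and ci: "\<And>\<delta> N. \<delta> > 0 \<Longrightarrow> \<exists>n\<ge>N. norm (w n - i) < norm (y - i) + \<delta>"
    by blast
  obtain h where h: "strict_mono h" and hP: "\<And>k. norm (w (h k) - i) < norm (y - i) + inverse (real (Suc k))"
    using pick_subseq[of "\<lambda>k n. norm (w n - i) < norm (y - i) + inverse (real (Suc k))"] ci by auto
  define u where "u k = w (h k) - i" for k
  have wu: "weakly_convergent_to u (y - i)" unfolding u_def
    using wc_diff[OF wc_subseq[OF wy h]] unfolding w_def comp_def by simp
  have nu: "(\<lambda>k. norm (u k)) \<longlonglongrightarrow> norm (y - i)"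
  proof (rule order_tendstoI)
    fix a assume "a < norm (y - i)"
    then show "eventually (\<lambda>k. a < norm (u k)) sequentially"
      using wc_lsc[OF wu, of "norm (y - i) - a"] by simp
  next
    fix a assume a: "norm (y - i) < a"
    have "eventually (\<lambda>k. inverse (real (Suc k)) < a - norm (y - i)) sequentially"
      using a by (intro order_tendstoD(2)[OF LIMSEQ_inverse_real_of_nat]) simp
    then show "eventually (\<lambda>k. norm (u k) < a) sequentially"
    proof eventually_elim
      case (elim k) then show ?case using hP[of k] unfolding u_def by simp
    qed
  qed
  obtain K where K: "(\<lambda>k. u (k + K)) \<longlonglongrightarrow> y - i" using kk_scaled[OF kk wu nu] by blast
  have "(\<lambda>k. u (k + K) + i) \<longlonglongrightarrow> y - i + i" using K by (intro tendsto_add) auto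
  then have "(v \<circ> (g \<circ> h \<circ> (\<lambda>k. k + K))) \<longlonglongrightarrow> y" unfolding u_def w_def comp_def by simp
  moreover have "strict_mono (g \<circ> h \<circ> (\<lambda>k. k + K))"
    using g h by (intro strict_mono_o) (auto simp: strict_mono_def)
  ultimately show "\<exists>g x. strict_mono g \<and> (v \<circ> g) \<longlonglongrightarrow> x" by blast
qed

definition adm :: "(nat \<Rightarrow> real) \<Rightarrow> bool" where
  "adm l \<longleftrightarrow> (\<forall>n. 0 \<le> l n) \<and> (\<forall>M. sum l {..<M} \<le> 1)"

definition Tm :: "'a::real_normed_vector \<Rightarrow> (nat \<Rightarrow> 'a) \<Rightarrow> (nat \<Rightarrow> real) \<Rightarrow> 'a" where
  "Tm x t l = x + (\<Sum>n. l n *\<^sub>R (t n - x))"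

definition Wset :: "'a::real_normed_vector \<Rightarrow> (nat \<Rightarrow> 'a) \<Rightarrow> 'a set" where
  "Wset x t = Tm x t ` {l. adm l}"

lemma adm_summable: "adm l \<Longrightarrow> summable l"
  unfolding adm_def by (intro summableI_nonneg_bounded) auto

lemma adm_le1: "adm l \<Longrightarrow> l n \<le> 1"
proof -
  assume a: "adm l"
  then have "l n \<le> sum l {..<Suc n}" unfolding adm_def
    by (intro member_le_sum) auto
  also have "\<dots> \<le> 1" using a unfolding adm_def by blast
  finally show ?thesis .
qed

lemma adm_ser_summable:
  fixes t :: "nat \<Rightarrow> 'a::banach"
  assumes "adm l" "\<And>n. norm (t n - x) \<le> B"
  shows "summable (\<lambda>n. l n *\<^sub>R (t n - x))"
proof (rule summable_comparison_test[where g="\<lambda>n. B * l n"])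
  have "norm (l n *\<^sub>R (t n - x)) \<le> B * l n" for n
    using mult_left_mono[OF assms(2)[of n], of "l n"] assms(1) unfolding adm_def
    by (simp add: mult.commute)
  then show "\<exists>N. \<forall>n\<ge>N. norm (l n *\<^sub>R (t n - x)) \<le> B * l n" by blast
  show "summable (\<lambda>n. B * l n)" using adm_summable[OF assms(1)] by (rule summable_mult)
qed

lemma Tm_functional:
  fixes t :: "nat \<Rightarrow> 'a::banach"
  assumes bl: "bounded_linear \<phi>" and "adm l" "\<And>n. norm (t n - x) \<le> B"
  shows "\<phi> (Tm x t l) = \<phi> x + (\<Sum>n. l n * (\<phi> (t n) - \<phi> x))"
proof -
  have "\<phi> (\<Sum>n. l n *\<^sub>R (t n - x)) = (\<Sum>n. \<phi> (l n *\<^sub>R (t n - x)))"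
    by (rule bounded_linear.suminf[OF bl adm_ser_summable[OF assms(2,3)]])
  also have "\<dots> = (\<Sum>n. l n * (\<phi> (t n) - \<phi> x))" using bl by (simp add: linear_simps)
  finally show ?thesis unfolding Tm_def using bl by (simp add: linear_simps)
qed

lemma Wset_convex:
  fixes t :: "nat \<Rightarrow> 'a::banach"
  assumes tb: "\<And>n. norm (t n - x) \<le> B"
  shows "convex (Wset x t)"
proof (rule convexI)
  fix p q :: 'a and u w :: real
  assume p: "p \<in> Wset x t" and q: "q \<in> Wset x t" and u: "0 \<le> u" and w: "0 \<le> w" and uw: "u + w = 1"
  obtain l1 where l1: "adm l1" "p = Tm x t l1" using p unfolding Wset_def by blast
  obtain l2 where l2: "adm l2" "q = Tm x t l2" using q unfolding Wset_def by blast
  define l where "l n = u * l1 n + w * l2 n" for n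
  have adml: "adm l" unfolding adm_def
  proof (intro conjI allI)
    fix n show "0 \<le> l n" unfolding l_def using l1(1) l2(1) u w unfolding adm_def by simp
  next
    fix M
    have "sum l {..<M} = u * sum l1 {..<M} + w * sum l2 {..<M}"
      unfolding l_def by (simp add: sum.distrib sum_distrib_left)
    also have "\<dots> \<le> u * 1 + w * 1"
      using l1(1) l2(1) u w unfolding adm_def by (intro add_mono mult_left_mono) auto
    finally show "sum l {..<M} \<le> 1" using uw by simp
  qed
  have s1: "summable (\<lambda>n. l1 n *\<^sub>R (t n - x))" by (rule adm_ser_summable[OF l1(1) tb])
  have s2: "summable (\<lambda>n. l2 n *\<^sub>R (t n - x))" by (rule adm_ser_summable[OF l2(1) tb])
  have "u *\<^sub>R p + w *\<^sub>R q = (u + w) *\<^sub>R x + (u *\<^sub>R (\<Sum>n. l1 n *\<^sub>R (t n - x)) + w *\<^sub>R (\<Sum>n. l2 n *\<^sub>R (t n - x)))"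
    unfolding l1(2) l2(2) Tm_def by (simp add: algebra_simps)
  also have "u *\<^sub>R (\<Sum>n. l1 n *\<^sub>R (t n - x)) + w *\<^sub>R (\<Sum>n. l2 n *\<^sub>R (t n - x))
      = (\<Sum>n. u *\<^sub>R (l1 n *\<^sub>R (t n - x))) + (\<Sum>n. w *\<^sub>R (l2 n *\<^sub>R (t n - x)))"
    using suminf_scaleR_right[OF s1, of u] suminf_scaleR_right[OF s2, of w] by simp
  also have "\<dots> = (\<Sum>n. u *\<^sub>R (l1 n *\<^sub>R (t n - x)) + w *\<^sub>R (l2 n *\<^sub>R (t n - x)))"
    by (intro suminf_add summable_scaleR_right s1 s2)
  also have "\<dots> = (\<Sum>n. l n *\<^sub>R (t n - x))"
    unfolding l_def by (simp add: scaleR_add_left)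
  finally have "u *\<^sub>R p + w *\<^sub>R q = Tm x t l" unfolding Tm_def using uw by simp
  then show "u *\<^sub>R p + w *\<^sub>R q \<in> Wset x t" unfolding Wset_def using adml by blast
qed

lemma Wset_weak_compact:
  fixes t v :: "nat \<Rightarrow> 'a::banach"
  assumes tb: "\<And>n. norm (t n - x) \<le> B" and wt: "weakly_convergent_to t x"
    and vW: "\<And>k. v k \<in> closure (Wset x t)"
  shows "\<exists>g y. strict_mono g \<and> weakly_convergent_to (v \<circ> g) y"
proof -
  have "\<exists>l. adm l \<and> dist (Tm x t l) (v k) < inverse (real (Suc k))" for k
  proof -
    have "inverse (real (Suc k)) > 0" by simp
    then obtain z where "z \<in> Wset x t" "dist z (v k) < inverse (real (Suc k))"
      using vW[of k] unfolding closure_approachable by blast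
    then show ?thesis unfolding Wset_def by blast
  qed
  then obtain \<Lambda> where \<Lambda>: "\<And>k. adm (\<Lambda> k)" and \<Lambda>d: "\<And>k. dist (Tm x t (\<Lambda> k)) (v k) < inverse (real (Suc k))"
    by metis
  have \<Lambda>01: "\<Lambda> k n \<in> {0..1}" for k n using \<Lambda>[of k] adm_le1[OF \<Lambda>[of k]] unfolding adm_def by auto
  let ?P = "\<lambda>n. \<lambda>s. convergent (\<lambda>k. \<Lambda> (s k) n)"
  interpret nat: subseqs ?P
  proof (unfold convergent_def, unfold subseqs_def, auto)
    fix n :: nat and s :: "nat \<Rightarrow> nat" assume s: "strict_mono s"
    have "\<And>k. \<Lambda> (s k) n \<in> {0..1}" using \<Lambda>01 by blast
    then have "\<exists>l s'. strict_mono s' \<and> ((\<lambda>k. \<Lambda> (s k) n) \<circ> s') \<longlonglongrightarrow> l"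
      using compact_Icc compact_imp_seq_compact seq_compactE by metis
    thus "\<exists>s'. strict_mono (s'::nat\<Rightarrow>nat) \<and> (\<exists>l. (\<lambda>k. \<Lambda> (s (s' k)) n) \<longlonglongrightarrow> l)"
      by (auto simp: comp_def)
  qed
  define d where "d = nat.diagseq"
  have subseq: "strict_mono d"
    unfolding d_def using nat.subseq_diagseq by auto
  have cnv: "?P n d" for n
  proof -
    have Pn_seqseq: "?P n (nat.seqseq (Suc n))"
      by (rule nat.seqseq_holds)
    have 1: "(\<lambda>k. \<Lambda> ((nat.seqseq (Suc n) \<circ> (\<lambda>k. nat.fold_reduce (Suc n) k
      (Suc n + k))) k) n) = (\<lambda>k. \<Lambda> (nat.seqseq (Suc n) k) n) \<circ>
      (\<lambda>k. nat.fold_reduce (Suc n) k (Suc n + k))"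
      by auto
    have 2: "?P n (d \<circ> ((+) (Suc n)))"
      unfolding d_def nat.diagseq_seqseq 1
      by (intro convergent_subseq_convergent Pn_seqseq nat.subseq_diagonal_rest)
    then obtain L where 3: "(\<lambda>na. \<Lambda> (d (na + Suc n)) n) \<longlonglongrightarrow> L"
      by (auto simp: add.commute dest: convergentD)
    then have "(\<lambda>k. \<Lambda> (d k) n) \<longlonglongrightarrow> L"
      by (rule LIMSEQ_offset)
    then show ?thesis
      by (auto simp: convergent_def)
  qed
  define \<mu> where "\<mu> n = lim (\<lambda>k. \<Lambda> (d k) n)" for n
  have Lc: "(\<lambda>k. \<Lambda> (d k) n) \<longlonglongrightarrow> \<mu> n" for n
    unfolding \<mu>_def using cnv convergent_LIMSEQ_iff by blast
  have \<mu>0: "0 \<le> \<mu> n" for n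
    by (rule LIMSEQ_le_const[OF Lc]) (use \<Lambda> in \<open>auto simp: adm_def\<close>)
  have \<mu>s: "sum \<mu> {..<M} \<le> 1" for M
  proof (rule LIMSEQ_le_const2)
    show "(\<lambda>k. \<Sum>n<M. \<Lambda> (d k) n) \<longlonglongrightarrow> sum \<mu> {..<M}" by (intro tendsto_sum Lc)
    show "\<exists>N. \<forall>k\<ge>N. (\<Sum>n<M. \<Lambda> (d k) n) \<le> 1" using \<Lambda> unfolding adm_def by blast
  qed
  have adm\<mu>: "adm \<mu>" unfolding adm_def using \<mu>0 \<mu>s by blast
  have wT: "weakly_convergent_to (\<lambda>k. Tm x t (\<Lambda> (d k))) (Tm x t \<mu>)"
    unfolding weakly_convergent_to_def
  proof (intro allI impI)
    fix \<phi> :: "'a \<Rightarrow> real" assume bl: "bounded_linear \<phi>"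
    have a: "(\<lambda>n. \<phi> (t n) - \<phi> x) \<longlonglongrightarrow> 0"
      using wt bl unfolding weakly_convergent_to_def
      using tendsto_diff[of "\<lambda>n. \<phi> (t n)" "\<phi> x" sequentially "\<lambda>n. \<phi> x" "\<phi> x"] by auto
    have "(\<lambda>k. \<Sum>n. \<Lambda> (d k) n * (\<phi> (t n) - \<phi> x)) \<longlonglongrightarrow> (\<Sum>n. \<mu> n * (\<phi> (t n) - \<phi> x))"
      by (rule series_limit[OF _ _ Lc \<mu>0 \<mu>s a]) (use \<Lambda> in \<open>auto simp: adm_def\<close>)
    then have "(\<lambda>k. \<phi> x + (\<Sum>n. \<Lambda> (d k) n * (\<phi> (t n) - \<phi> x))) \<longlonglongrightarrow> \<phi> x + (\<Sum>n. \<mu> n * (\<phi> (t n) - \<phi> x))"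
      by (intro tendsto_add tendsto_const)
    then show "(\<lambda>k. \<phi> (Tm x t (\<Lambda> (d k)))) \<longlonglongrightarrow> \<phi> (Tm x t \<mu>)"
      using Tm_functional[OF bl _ tb] \<Lambda> adm\<mu> by simp
  qed
  have close: "(\<lambda>k. Tm x t (\<Lambda> (d k)) - v (d k)) \<longlonglongrightarrow> 0"
  proof (rule Lim_null_comparison[OF _ LIMSEQ_inverse_real_of_nat])
    show "\<forall>\<^sub>F k in sequentially. norm (Tm x t (\<Lambda> (d k)) - v (d k)) \<le> inverse (real (Suc k))"
    proof (intro always_eventually allI)
      fix k
      have "norm (Tm x t (\<Lambda> (d k)) - v (d k)) \<le> inverse (real (Suc (d k)))"
        using \<Lambda>d[of "d k"] by (simp add: dist_norm)
      also have "\<dots> \<le> inverse (real (Suc k))"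
        using seq_suble[OF subseq, of k] by (simp add: le_imp_inverse_le)
      finally show "norm (Tm x t (\<Lambda> (d k)) - v (d k)) \<le> inverse (real (Suc k))" .
    qed
  qed
  have "weakly_convergent_to (v \<circ> d) (Tm x t \<mu>)"
    using wc_close[OF wT close] by (simp add: comp_def)
  then show ?thesis using subseq by blast
qed

lemma not_kk_counter:
  assumes nkk: "\<not> kadec_klee TYPE('a::banach)"
  shows "\<exists>V::'a set. V \<noteq> {} \<and> closed V \<and> convex V \<and> weak_SACP_cwm V \<and> \<not> norm_SACP_cwm V"
proof -
  obtain x :: 'a and s where nx: "norm x = 1" and ns: "\<And>n. norm (s n) = 1"
    and ws: "weakly_convergent_to s x" and nconv: "\<not> s \<longlonglongrightarrow> x"
    using nkk unfolding kadec_klee_def by blast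
  obtain \<psi> where bl: "bounded_linear \<psi>" and \<psi>ab: "\<And>w. \<bar>\<psi> w\<bar> \<le> norm w" and \<psi>x: "\<psi> x = norm x"
    using norming_functional[of x] by blast
  have \<psi>x1: "\<psi> x = 1" using \<psi>x nx by simp
  have \<psi>s: "(\<lambda>n. \<psi> (s n)) \<longlonglongrightarrow> 1" using ws bl \<psi>x1 unfolding weakly_convergent_to_def by metis
  obtain \<epsilon> where \<epsilon>: "\<epsilon> > 0" and \<epsilon>f: "\<And>N. \<exists>n\<ge>N. \<epsilon> \<le> norm (s n - x)"
    using nconv unfolding LIMSEQ_iff by (auto simp: not_less)
  have "eventually (\<lambda>n. 1/2 < \<psi> (s n)) sequentially"
    using order_tendstoD(1)[OF \<psi>s, of "1/2"] by simp
  then obtain N0 where N0: "\<And>n. n \<ge> N0 \<Longrightarrow> 1/2 < \<psi> (s n)" unfolding eventually_sequentially by blast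
  have ex: "\<exists>n\<ge>N. \<epsilon> \<le> norm (s n - x) \<and> 1/2 < \<psi> (s n)" for N
  proof -
    obtain n where "n \<ge> max N N0" "\<epsilon> \<le> norm (s n - x)" using \<epsilon>f by blast
    then show ?thesis using N0 by (intro exI[of _ n]) auto
  qed
  obtain h :: "nat \<Rightarrow> nat" where h: "strict_mono h" and hP: "\<And>k. \<epsilon> \<le> norm (s (h k) - x) \<and> 1/2 < \<psi> (s (h k))"
    using pick_subseq[of "\<lambda>k n. \<epsilon> \<le> norm (s n - x) \<and> 1/2 < \<psi> (s n)", OF ex] by blast
  define c where "c k = \<psi> (s (h k))" for k
  have c2: "1/2 < c k" for k unfolding c_def using hP by blast
  have cpos: "0 < c k" for k using c2[of k] by simp
  have c1: "c \<longlonglongrightarrow> 1" unfolding c_def using LIMSEQ_subseq_LIMSEQ[OF \<psi>s h] by (simp add: comp_def)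
  define t where "t k = (1 / c k) *\<^sub>R s (h k)" for k
  have \<psi>t: "\<psi> (t k) = 1" for k
    unfolding t_def using bl cpos[of k] by (simp add: linear_simps c_def)
  have nt: "norm (t k) = 1 / c k" for k unfolding t_def using cpos[of k] ns by simp
  have ntb: "norm (t k) \<le> 2" for k
  proof -
    have "1 / c k \<le> 2" using c2[of k] cpos[of k] by (simp add: divide_le_eq)
    then show ?thesis using nt by simp
  qed
  have tb: "norm (t n - x) \<le> 3" for n
    using norm_triangle_ineq4[of "t n" x] ntb[of n] nx by simp
  have wt: "weakly_convergent_to t x"
  proof -
    have "(\<lambda>k. 1 / c k) \<longlonglongrightarrow> 1 / 1" using c1 by (intro tendsto_divide) auto
    from wc_scale[OF this wc_subseq[OF ws h]] show ?thesis unfolding t_def by (simp add: comp_def)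
  qed
  have ntl: "(\<lambda>k. norm (t k)) \<longlonglongrightarrow> 1"
  proof -
    have "(\<lambda>k. 1 / c k) \<longlonglongrightarrow> 1 / 1" using c1 by (intro tendsto_divide) auto
    then show ?thesis using nt by simp
  qed
  define V where "V = closure (Wset x t)"
  have adm0: "adm (\<lambda>_. 0)" unfolding adm_def by simp
  have xW: "x \<in> Wset x t"
  proof -
    have "Tm x t (\<lambda>_. 0) = x" unfolding Tm_def by simp
    then show ?thesis unfolding Wset_def using adm0 by (metis image_eqI mem_Collect_eq)
  qed
  have tW: "t k \<in> Wset x t" for k
  proof -
    define l where "l n = (if n = k then 1 else (0::real))" for n
    have "adm l" unfolding adm_def l_def
    proof (intro conjI allI)
      fix M show "(\<Sum>n<M. if n = k then 1 else (0::real)) \<le> 1" by (simp add: sum.delta)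
    qed simp
    moreover have "Tm x t l = t k"
    proof -
      have "(\<lambda>n. l n *\<^sub>R (t n - x)) = (\<lambda>n. if n = k then t n - x else 0)" unfolding l_def by (intro ext) simp
      moreover have "(\<lambda>n. if n = k then t n - x else 0) sums (t k - x)" by (rule sums_single)
      ultimately have "(\<Sum>n. l n *\<^sub>R (t n - x)) = t k - x" using sums_unique by metis
      then show ?thesis unfolding Tm_def by simp
    qed
    ultimately show ?thesis unfolding Wset_def by (metis image_eqI mem_Collect_eq)
  qed
  have xV: "x \<in> V" and tV: "\<And>k. t k \<in> V" unfolding V_def using xW tW closure_subset by blast+
  have \<psi>W: "Wset x t \<subseteq> {v. \<psi> v = 1}"
  proof
    fix v assume "v \<in> Wset x t"
    then obtain l where l: "adm l" "v = Tm x t l" unfolding Wset_def by blast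
    have "\<psi> v = \<psi> x + (\<Sum>n. l n * (\<psi> (t n) - \<psi> x))" using Tm_functional[OF bl l(1) tb] l(2) by simp
    then show "v \<in> {v. \<psi> v = 1}" using \<psi>t \<psi>x1 by simp
  qed
  have \<psi>V: "V \<subseteq> {v. \<psi> v = 1}" unfolding V_def
  proof (rule closure_minimal[OF \<psi>W])
    show "closed {v. \<psi> v = 1}"
      by (rule closed_Collect_eq) (auto intro: linear_continuous_on[OF bl])
  qed
  have nV: "1 \<le> norm v" if "v \<in> V" for v
    using \<psi>V that \<psi>ab[of v] by auto
  define f0 where "f0 = (\<lambda>\<phi>::'a \<Rightarrow> real. \<phi> 0)"
  have f0F: "f0 \<in> F_cwm {0}" unfolding F_cwm_def linf_plus_def f0_def by auto
  have rf0: "r_f f0 v {0} = norm v" for v unfolding r_f_def f0_def by simp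
  have rad1: "rad_f f0 V {0} = 1"
  proof -
    have Vne: "V \<noteq> {}" using xV by blast
    have "1 \<le> (INF v\<in>V. norm v)" using Vne nV by (intro cINF_greatest) auto
    moreover have "(INF v\<in>V. norm v) \<le> norm x"
      by (rule cINF_lower[OF _ xV]) (auto simp: bdd_below_def intro!: exI[of _ 0])
    ultimately show ?thesis unfolding rad_f_def rf0 using nx by simp
  qed
  have "V \<noteq> {}" using xV by blast
  moreover have "closed V" unfolding V_def by simp
  moreover have "convex V" unfolding V_def by (intro convex_closure Wset_convex[OF tb])
  moreover have "weak_SACP_cwm V"
    unfolding weak_SACP_cwm_def SACP_cwm_def
  proof (intro allI impI ballI)
    fix F :: "'a set" and f v
    assume "(\<forall>n. v n \<in> V) \<and> (\<lambda>n. r_f f (v n) F) \<longlonglongrightarrow> rad_f f V F"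
    then have "\<And>n. v n \<in> closure (Wset x t)" unfolding V_def by blast
    then show "\<exists>g y. strict_mono g \<and> weakly_convergent_to (v \<circ> g) y"
      by (rule Wset_weak_compact[OF tb wt])
  qed
  moreover have "\<not> norm_SACP_cwm V"
  proof
    assume "norm_SACP_cwm V"
    then have S: "SACP_cwm (\<lambda>s x. s \<longlonglongrightarrow> x) V" unfolding norm_SACP_cwm_def .
    have fin: "finite {0::'a} \<and> {0::'a} \<noteq> {}" by simp
    have tt: "(\<forall>n. t n \<in> V) \<and> (\<lambda>n. r_f f0 (t n) {0}) \<longlonglongrightarrow> rad_f f0 V {0}"
      using tV ntl unfolding rf0 rad1 by blast
    obtain g z where g: "strict_mono g" and tz: "(t \<circ> g) \<longlonglongrightarrow> z"
      using S[unfolded SACP_cwm_def, rule_format, OF fin f0F tt] by blast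
    have "z = x" using wc_unique[OF wc_norm[OF tz] wc_subseq[OF wt g]] .
    then have tgx: "(\<lambda>k. t (g k)) \<longlonglongrightarrow> x" using tz by (simp add: comp_def)
    have cg: "(\<lambda>k. c (g k)) \<longlonglongrightarrow> 1" using LIMSEQ_subseq_LIMSEQ[OF c1 g] by (simp add: comp_def)
    have "(\<lambda>k. c (g k) *\<^sub>R t (g k)) \<longlonglongrightarrow> 1 *\<^sub>R x" by (intro tendsto_scaleR cg tgx)
    moreover have "c (g k) *\<^sub>R t (g k) = s (h (g k))" for k unfolding t_def using cpos[of "g k"] by simp
    ultimately have "(\<lambda>k. s (h (g k))) \<longlonglongrightarrow> x" by simp
    then have "(\<lambda>k. s (h (g k)) - x) \<longlonglongrightarrow> 0" by (simp add: LIM_zero)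
    then have "(\<lambda>k. norm (s (h (g k)) - x)) \<longlonglongrightarrow> 0" by (rule tendsto_norm_zero)
    from order_tendstoD(2)[OF this \<epsilon>]
    have "eventually (\<lambda>k. norm (s (h (g k)) - x) < \<epsilon>) sequentially" .
    then obtain k where "norm (s (h (g k)) - x) < \<epsilon>" by (meson eventually_sequentially order_refl)
    then show False using hP[of "g k"] by simp
  qed
  ultimately show ?thesis by blast
qed

theorem proposition2p8:
  "kadec_klee TYPE('a::banach) \<longleftrightarrow>
     (\<forall>V::'a set. V \<noteq> {} \<and> closed V \<and> convex V \<longrightarrow>
        weak_SACP_cwm V \<longrightarrow> norm_SACP_cwm V)"
proof
  assume kk: "kadec_klee TYPE('a)"
  show "\<forall>V::'a set. V \<noteq> {} \<and> closed V \<and> convex V \<longrightarrow> weak_SACP_cwm V \<longrightarrow> norm_SACP_cwm V"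
    using kk_imp_sacp[OF kk] by blast
next
  assume H: "\<forall>V::'a set. V \<noteq> {} \<and> closed V \<and> convex V \<longrightarrow> weak_SACP_cwm V \<longrightarrow> norm_SACP_cwm V"
  show "kadec_klee TYPE('a)"
  proof (rule ccontr)
    assume "\<not> kadec_klee TYPE('a)"
    from not_kk_counter[OF this] H show False by blast
  qed
qed

end
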